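(* Let $G=(V,E)$ be a connected undirected graph on $n$ nodes with Laplacian $L$, let $\kappa_1,\dots,\kappa_n>0$, and let $D_\kappa=\mathrm{diag}(\kappa_1,\dots,\kappa_n)$. For $S\subseteq V$ let $D_S$ be the diagonal $0/1$ matrix with $(D_S)_{ii}=1$ iff $i\in S$, and set $Q_S=L+D_\kappa D_S$ (write $Q_v$ for $Q_{\{v\}}$). Define $f:2^V\to\mathbb{R}$ by $f(\emptyset)=0$ and $f(S)=C-\mathrm{tr}(Q_S^{-1})$ for $S\neq\emptyset$, where $C=2\max_{v\in V}\mathrm{tr}(Q_v^{-1})$. Then $f$ is submodular, i.e., for all $A,B\subseteq V$, $f(A)+f(B)\ge f(A\cup B)+f(A\cap B)$.
   Context: For nonempty $S$, the matrix $Q_S$ is positive definite, so $Q_S^{-1}$ exists. *)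

theory Defs
  imports "HOL-Analysis.Analysis"
begin

definition undirected_graph :: "('n \<Rightarrow> 'n \<Rightarrow> bool) \<Rightarrow> bool" where
  "undirected_graph E \<longleftrightarrow> (\<forall>i j. E i j \<longrightarrow> E j i) \<and> (\<forall>i. \<not> E i i)"

definition graph_connected :: "('n \<Rightarrow> 'n \<Rightarrow> bool) \<Rightarrow> bool" where
  "graph_connected E \<longleftrightarrow> (\<forall>i j. E\<^sup>*\<^sup>* i j)"

definition laplacian :: "('n::finite \<Rightarrow> 'n \<Rightarrow> bool) \<Rightarrow> real^'n^'n" where
  "laplacian E = (\<chi> i j. if i = j then real (card {k. E i k}) else if E i j then -1 else 0)"

definition Qmat :: "('n::finite \<Rightarrow> 'n \<Rightarrow> bool) \<Rightarrow> ('n \<Rightarrow> real) \<Rightarrow> 'n set \<Rightarrow> real^'n^'n" where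
  "Qmat E \<kappa> S = laplacian E + (\<chi> i j. if i = j \<and> i \<in> S then \<kappa> i else 0)"

definition Cconst :: "('n::finite \<Rightarrow> 'n \<Rightarrow> bool) \<Rightarrow> ('n \<Rightarrow> real) \<Rightarrow> real" where
  "Cconst E \<kappa> = 2 * (MAX v\<in>UNIV. trace (matrix_inv (Qmat E \<kappa> {v})))"

definition fset :: "('n::finite \<Rightarrow> 'n \<Rightarrow> bool) \<Rightarrow> ('n \<Rightarrow> real) \<Rightarrow> 'n set \<Rightarrow> real" where
  "fset E \<kappa> S = (if S = {} then 0 else Cconst E \<kappa> - trace (matrix_inv (Qmat E \<kappa> S)))"

end

theory Submission
  imports Defs
begin

definition Dg :: "('n::finite \<Rightarrow> real) \<Rightarrow> 'n set \<Rightarrow> real^'n^'n" where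
  "Dg \<kappa> X = (\<chi> i j. if i = j \<and> i \<in> X then \<kappa> i else 0)"

lemma Qent: "Qmat E \<kappa> S $ i $ j = (if i = j then real (card {k. E i k}) else if E i j then -1 else 0)
   + (if i = j \<and> i \<in> S then \<kappa> i else 0)"
  by (simp add: Qmat_def laplacian_def)

lemma Qrow:
  assumes "undirected_graph E"
  shows "(Qmat E \<kappa> S *v x)$i = real (card {k. E i k}) * x$i - (\<Sum>k\<in>{k. E i k}. x$k)
           + (if i\<in>S then \<kappa> i * x$i else 0)"
proof -
  have irr: "\<not> E i i" using assms by (simp add: undirected_graph_def)
  have "(Qmat E \<kappa> S *v x)$i = (\<Sum>j\<in>UNIV. (if j = i then real (card {k. E i k}) * x$i + (if i\<in>S then \<kappa> i * x$i else 0) else 0)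
        - (if j \<in> {k. E i k} then x$j else 0))"
    unfolding matrix_vector_mult_def vec_lambda_beta Qent
    by (intro sum.cong) (auto simp: irr algebra_simps)
  also have "\<dots> = real (card {k. E i k}) * x$i + (if i\<in>S then \<kappa> i * x$i else 0) - (\<Sum>k\<in>{k. E i k}. x$k)"
    by (simp add: sum_subtractf sum.If_cases)
  finally show ?thesis by simp
qed

lemma minprinc:
  assumes ug: "undirected_graph E" and conn: "graph_connected E"
    and kp: "\<And>i. \<kappa> i > 0" and Sne: "S \<noteq> {}"
    and nn: "\<And>i. (Qmat E \<kappa> S *v x)$i \<ge> 0"
  shows "x$i \<ge> 0"
proof (rule ccontr)
  assume neg: "\<not> x$i \<ge> 0"
  define m where "m = Min (range (\<lambda>j. x$j))"
  have mle: "\<And>j. m \<le> x$j" unfolding m_def by (intro Min_le) auto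
  have "m \<in> range (\<lambda>j. x$j)" unfolding m_def by (intro Min_in) auto
  then obtain i0 where i0: "x$i0 = m" by auto
  have mneg: "m < 0" using mle[of i] neg by linarith
  have step: "x$z = m \<and> (y \<notin> S)" if y: "x$y = m" and e: "E y z" for y z
  proof -
    let ?N = "{k. E y k}"
    have q: "0 \<le> real (card ?N) * x$y - (\<Sum>k\<in>?N. x$k) + (if y\<in>S then \<kappa> y * x$y else 0)"
      using nn[of y] Qrow[OF ug] by simp
    have s1: "(\<Sum>k\<in>?N. x$k - m) = (\<Sum>k\<in>?N. x$k) - real (card ?N) * m"
      by (simp add: sum_subtractf)
    have s2: "(\<Sum>k\<in>?N. x$k - m) \<ge> 0" using mle by (simp add: sum_nonneg)
    have s3: "(if y\<in>S then \<kappa> y * x$y else 0) \<le> 0"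
      using y mult_pos_neg[OF kp[of y] mneg] by simp
    have z0: "(\<Sum>k\<in>?N. x$k - m) = 0"
      using q s1 s2 s3 unfolding y by linarith
    have yS: "(if y\<in>S then \<kappa> y * x$y else 0) = 0"
      using q s1 s2 s3 unfolding y by linarith
    have "x$z - m = 0"
      using z0 sum_nonneg_eq_0_iff[of ?N "\<lambda>k. x$k - m"] mle e by auto
    moreover have "y \<notin> S" using yS y mneg kp[of y] by (auto split: if_splits)
    ultimately show ?thesis by simp
  qed
  have all: "x$j = m" if "E\<^sup>*\<^sup>* i0 j" for j
    using that by (induction rule: rtranclp_induct) (use i0 step in auto)
  obtain s where s: "s \<in> S" using Sne by auto
  obtain t where "E s t"
  proof (cases "\<exists>t. E s t")
    case True then show ?thesis using that by blast
  next
    case False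
    have q: "0 \<le> real (card {k. E s k}) * x$s - (\<Sum>k\<in>{k. E s k}. x$k) + (if s\<in>S then \<kappa> s * x$s else 0)"
      using nn[of s] Qrow[OF ug] by simp
    with False s all[of s] conn mult_pos_neg[OF kp[of s] mneg] have False
      by (simp add: graph_connected_def)
    then show ?thesis ..
  qed
  then show False using step[of s t] all[of s] conn s unfolding graph_connected_def by auto
qed


locale gr =
  fixes E :: "'n::finite \<Rightarrow> 'n \<Rightarrow> bool" and \<kappa> :: "'n \<Rightarrow> real"
  assumes ug: "undirected_graph E" and conn: "graph_connected E"
    and kp: "\<And>i. \<kappa> i > 0"
begin

abbreviation "Q S \<equiv> Qmat E \<kappa> S"
abbreviation "M S \<equiv> matrix_inv (Qmat E \<kappa> S)"

lemma mprin: "S \<noteq> {} \<Longrightarrow> (\<And>i. 0 \<le> (Q S *v x)$i) \<Longrightarrow> 0 \<le> x$i"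
  by (rule minprinc[of E \<kappa>, OF ug conn kp])

lemma matrix_add_rdistrib: "((A::real^'n^'n) + B) ** C = A ** C + B ** C"
  by (vector matrix_matrix_mult_def sum.distrib[symmetric] field_simps)

lemma Qinv:
  assumes "S \<noteq> {}"
  shows "Q S ** M S = mat 1 \<and> M S ** Q S = mat 1"
proof -
  have "\<forall>x. Q S *v x = 0 \<longrightarrow> x = 0"
  proof (intro allI impI)
    fix x assume x0: "Q S *v x = 0"
    have a: "x$i \<ge> 0" for i
      by (rule mprin[OF assms]) (simp add: x0)
    have "Q S *v (-x) = -(Q S *v x)" by (simp add: vec_eq_iff matrix_vector_mult_def sum_negf)
    then have nx: "Q S *v (-x) = 0" using x0 by simp
    have b: "(-x)$i \<ge> 0" for i
      by (rule mprin[OF assms]) (simp add: nx)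
    show "x = 0"
    proof (rule vec_eq_iff[THEN iffD2, rule_format])
      fix i show "x$i = 0$i" using a[of i] b[of i] by simp
    qed
  qed
  then have "\<exists>B. B ** Q S = mat 1" by (subst matrix_left_invertible_ker)
  then have "invertible (Q S)" by (subst invertible_left_inverse)
  then show ?thesis unfolding matrix_inv_def invertible_def by (rule someI_ex)
qed

lemma Minv_nonneg:
  assumes "S \<noteq> {}"
  shows "M S $ i $ j \<ge> 0"
proof -
  define x where "x = (\<chi> k. M S $ k $ j)"
  have "(Q S *v x) $ k = (Q S ** M S) $ k $ j" for k
    by (simp add: x_def matrix_vector_mult_def matrix_matrix_mult_def)
  then have "(Q S *v x) $ k \<ge> 0" for k using Qinv[OF assms] by (simp add: mat_def)
  then have "x $ i \<ge> 0" by (rule mprin[OF assms])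
  then show ?thesis by (simp add: x_def)
qed

lemma Qsplit: "S \<subseteq> T \<Longrightarrow> Q T = Q S + Dg \<kappa> (T - S)"
  by (auto simp: Qmat_def Dg_def vec_eq_iff)

lemma ADB: "(A ** Dg \<kappa> X ** B) $ i $ j = (\<Sum>k\<in>UNIV. A$i$k * (if k \<in> X then \<kappa> k else 0) * B$k$j)"
proof -
  have "(A ** Dg \<kappa> X) $ i $ l = A$i$l * (if l \<in> X then \<kappa> l else 0)" for l
  proof -
    have "(A ** Dg \<kappa> X) $ i $ l = (\<Sum>k\<in>UNIV. if k = l then A$i$k * (if k\<in>X then \<kappa> k else 0) else 0)"
      unfolding matrix_matrix_mult_def Dg_def vec_lambda_beta by (intro sum.cong) auto
    then show ?thesis by simp
  qed
  then show ?thesis by (simp add: matrix_matrix_mult_def)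
qed

lemma diff_ident:
  assumes "S \<noteq> {}" "S \<subseteq> T"
  shows "M S - M T = M S ** Dg \<kappa> (T - S) ** M T"
proof -
  have T: "T \<noteq> {}" using assms by auto
  have "M S = M S ** (Q T ** M T)" using Qinv[OF T] by simp
  also have "\<dots> = (M S ** Q T) ** M T" by (simp add: matrix_mul_assoc)
  also have "M S ** Q T = mat 1 + M S ** Dg \<kappa> (T - S)"
    using Qsplit[OF assms(2)] Qinv[OF assms(1)] by (simp add: matrix_add_ldistrib)
  also have "(mat 1 + M S ** Dg \<kappa> (T - S)) ** M T = M T + M S ** Dg \<kappa> (T - S) ** M T"
    by (simp add: matrix_add_rdistrib)
  finally show ?thesis by (metis add_diff_cancel_left')
qed

lemma mono_ent:
  assumes "S \<noteq> {}" "S \<subseteq> T"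
  shows "M T $ i $ j \<le> M S $ i $ j"
proof -
  have T: "T \<noteq> {}" using assms by auto
  have "(M S - M T) $ i $ j \<ge> 0"
    unfolding diff_ident[OF assms] ADB
  proof (intro sum_nonneg)
    fix k
    have "0 \<le> (if k \<in> T - S then \<kappa> k else 0)" using kp[of k] by simp
    then show "0 \<le> M S $ i $ k * (if k \<in> T - S then \<kappa> k else 0) * M T $ k $ j"
      using Minv_nonneg[OF assms(1)] Minv_nonneg[OF T] by (intro mult_nonneg_nonneg) auto
  qed
  then show ?thesis by simp
qed

lemma trace_diff:
  assumes "S \<noteq> {}" "S \<subseteq> T"
  shows "trace (M S) - trace (M T) =
    (\<Sum>i\<in>UNIV. \<Sum>k\<in>UNIV. M S$i$k * (if k \<in> T - S then \<kappa> k else 0) * M T$k$i)"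
proof -
  have "trace (M S) - trace (M T) = trace (M S - M T)"
    by (simp add: trace_def sum_subtractf)
  then show ?thesis unfolding diff_ident[OF assms] trace_def ADB by simp
qed

lemma trace_mono:
  assumes "S \<noteq> {}" "S \<subseteq> T"
  shows "trace (M T) \<le> trace (M S)"
proof -
  have T: "T \<noteq> {}" using assms by auto
  have "0 \<le> (\<Sum>i\<in>UNIV. \<Sum>k\<in>UNIV. M S$i$k * (if k \<in> T - S then \<kappa> k else 0) * M T$k$i)"
  proof (intro sum_nonneg)
    fix i k
    have "0 \<le> (if k \<in> T - S then \<kappa> k else 0)" using kp[of k] by simp
    then show "0 \<le> M S $ i $ k * (if k \<in> T - S then \<kappa> k else 0) * M T $ k $ i"
      using Minv_nonneg[OF assms(1)] Minv_nonneg[OF T] by (intro mult_nonneg_nonneg) auto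
  qed
  then show ?thesis using trace_diff[OF assms] by linarith
qed

lemma trace_nonneg: "S \<noteq> {} \<Longrightarrow> trace (M S) \<ge> 0"
  unfolding trace_def by (intro sum_nonneg Minv_nonneg)

end


theorem theorem2:
  fixes E :: "'n::finite \<Rightarrow> 'n \<Rightarrow> bool" and \<kappa> :: "'n \<Rightarrow> real"
  assumes "undirected_graph E" and "graph_connected E"
    and "\<And>i. \<kappa> i > 0"
  shows "\<forall>A B. fset E \<kappa> A + fset E \<kappa> B \<ge> fset E \<kappa> (A \<union> B) + fset E \<kappa> (A \<inter> B)"
proof (intro allI)
  fix A B :: "'n set"
  interpret g: gr E \<kappa> using assms by unfold_locales auto
  define g where "g S = trace (matrix_inv (Qmat E \<kappa> S))" for S
  define C where "C = Cconst E \<kappa>"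
  have fs: "S \<noteq> {} \<Longrightarrow> fset E \<kappa> S = C - g S" for S by (simp add: fset_def g_def C_def)
  have f0: "fset E \<kappa> {} = 0" by (simp add: fset_def)
  show "fset E \<kappa> A + fset E \<kappa> B \<ge> fset E \<kappa> (A \<union> B) + fset E \<kappa> (A \<inter> B)"
  proof (cases "A = {} \<or> B = {}")
    case True then show ?thesis using f0 by auto
  next
    case False
    then have An: "A \<noteq> {}" and Bn: "B \<noteq> {}" by auto
    have ABn: "A \<union> B \<noteq> {}" using An by auto
    show ?thesis
    proof (cases "A \<inter> B = {}")
      case True
      have gmax: "g S \<le> C / 2" if Sn: "S \<noteq> {}" for S
      proof -
        obtain a where a: "a \<in> S" using Sn by auto
        have "g S \<le> g {a}" unfolding g_def using a by (intro g.trace_mono) auto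
        also have "g {a} \<le> (MAX v\<in>UNIV. trace (matrix_inv (Qmat E \<kappa> {v})))"
          unfolding g_def by (intro Max_ge) auto
        finally show ?thesis by (simp add: C_def Cconst_def)
      qed
      have "g (A \<union> B) \<ge> 0" unfolding g_def using ABn by (rule g.trace_nonneg)
      then show ?thesis using gmax[OF An] gmax[OF Bn] fs[OF An] fs[OF Bn] fs[OF ABn] True f0
        by simp
    next
      case False
      note I = False
      let ?d = "\<lambda>k. if k \<in> B - A then \<kappa> k else 0"
      have s1: "B - A \<inter> B = B - A" by auto
      have s2: "A \<union> B - A = B - A" by auto
      have e1: "g (A \<inter> B) - g B = (\<Sum>i\<in>UNIV. \<Sum>k\<in>UNIV.
          matrix_inv (Qmat E \<kappa> (A \<inter> B))$i$k * ?d k * matrix_inv (Qmat E \<kappa> B)$k$i)"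
        unfolding g_def using g.trace_diff[OF I, of B] s1 by simp
      have e2: "g A - g (A \<union> B) = (\<Sum>i\<in>UNIV. \<Sum>k\<in>UNIV.
          matrix_inv (Qmat E \<kappa> A)$i$k * ?d k * matrix_inv (Qmat E \<kappa> (A \<union> B))$k$i)"
        unfolding g_def using g.trace_diff[OF An, of "A \<union> B"] s2 by simp
      have le: "g A - g (A \<union> B) \<le> g (A \<inter> B) - g B"
        unfolding e1 e2
      proof (intro sum_mono)
        fix i k
        have d: "0 \<le> ?d k" using assms(3)[of k] by simp
        have m1: "matrix_inv (Qmat E \<kappa> A)$i$k \<le> matrix_inv (Qmat E \<kappa> (A \<inter> B))$i$k"
          by (rule g.mono_ent[OF I]) auto
        have m2: "matrix_inv (Qmat E \<kappa> (A \<union> B))$k$i \<le> matrix_inv (Qmat E \<kappa> B)$k$i"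
          by (rule g.mono_ent[OF Bn]) auto
        have p1: "0 \<le> matrix_inv (Qmat E \<kappa> A)$i$k" by (rule g.Minv_nonneg[OF An])
        have p2: "0 \<le> matrix_inv (Qmat E \<kappa> (A \<union> B))$k$i" by (rule g.Minv_nonneg[OF ABn])
        have c1: "matrix_inv (Qmat E \<kappa> A)$i$k * ?d k \<le> matrix_inv (Qmat E \<kappa> (A \<inter> B))$i$k * ?d k"
          using m1 d by (rule mult_right_mono)
        have c2: "0 \<le> matrix_inv (Qmat E \<kappa> (A \<inter> B))$i$k * ?d k"
          using g.Minv_nonneg[OF I] d by simp
        show "matrix_inv (Qmat E \<kappa> A)$i$k * ?d k * matrix_inv (Qmat E \<kappa> (A \<union> B))$k$i
          \<le> matrix_inv (Qmat E \<kappa> (A \<inter> B))$i$k * ?d k * matrix_inv (Qmat E \<kappa> B)$k$i"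
          by (rule mult_mono[OF c1 m2 c2 p2])
      qed
      show ?thesis using le fs[OF An] fs[OF Bn] fs[OF ABn] fs[OF I] by linarith
    qed
  qed
qed

end
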